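(* For every $n\ge1$ there is an injective map from $\bar{Q}_3(0,n)$ to $\bar{P}_3(0,n)$.
   Context: Partitions: $\lambda_1\ge\cdots\ge\lambda_\ell>0$, $\ell(\lambda)=\ell$, $\lambda_i=0$ for $i>\ell$, $s(\lambda)$ the smallest part with $s(\emptyset)=+\infty$. Rank $=\lambda_1-\ell$. Durfee symbol $(\alpha,\beta)_j$ of $\lambda$: $j$ is the largest integer with $\lambda_j\ge j$, $\alpha$ is the conjugate of $(\lambda_1-j,\dots,\lambda_j-j)$, $\beta=(\lambda_{j+1},\lambda_{j+2},\dots)$; $|\lambda|=|\alpha|+|\beta|+j^2$. $\bar{Q}_3(0,n)$ is the set of partitions of $n$ whose Durfee symbol $(\alpha,\beta)_j$ satisfies $j\ge1$, $\beta_1=j$, $\ell(\beta)-\ell(\alpha)\ge1$, $\alpha_1=\alpha_2=j$, $s(\alpha)=1$ and $s(\beta)=2$. $\bar{P}_3(0,n)$ is the set of partitions of $n$ with rank $\ge0$ whose Durfee symbol $(\gamma,\delta)_{j'}$ satisfies $j'\ge1$, $\ell(\gamma)=\ell(\delta)$, $\gamma_1\le j'-2$, $\delta_1=j'$ and $s(\delta)=1$. *)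

theory Defs
  imports Main "HOL-Library.Extended_Nat"
begin

definition is_partition :: "nat list \<Rightarrow> bool" where
  "is_partition xs \<longleftrightarrow> sorted_wrt (\<ge>) xs \<and> 0 \<notin> set xs"

definition partition_of :: "nat \<Rightarrow> nat list \<Rightarrow> bool" where
  "partition_of n xs \<longleftrightarrow> is_partition xs \<and> sum_list xs = n"

text \<open>The i-th part (1-indexed), zero beyond the length.\<close>
definition part :: "nat list \<Rightarrow> nat \<Rightarrow> nat" where
  "part xs i = (if 1 \<le> i \<and> i \<le> length xs then xs ! (i - 1) else 0)"

definition smallest :: "nat list \<Rightarrow> enat" where
  "smallest xs = (if xs = [] then \<infinity> else enat (Min (set xs)))"

definition rank :: "nat list \<Rightarrow> int" where
  "rank xs = int (part xs 1) - int (length xs)"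

text \<open>Conjugate of a weakly decreasing list of naturals (zero entries allowed).\<close>
definition conj :: "nat list \<Rightarrow> nat list" where
  "conj ys = [length (filter (\<lambda>y. i \<le> y) ys). i \<leftarrow> [1..<Suc (foldr max ys 0)]]"

definition durfee :: "nat list \<Rightarrow> nat" where
  "durfee xs = (GREATEST j. j \<le> part xs j)"

definition dalpha :: "nat list \<Rightarrow> nat list" where
  "dalpha xs = conj (map (\<lambda>x. x - durfee xs) (take (durfee xs) xs))"

definition dbeta :: "nat list \<Rightarrow> nat list" where
  "dbeta xs = drop (durfee xs) xs"

definition Q3bar :: "nat \<Rightarrow> nat list set" where
  "Q3bar n = {xs. partition_of n xs \<and>
     (let j = durfee xs; \<alpha> = dalpha xs; \<beta> = dbeta xs in
       j \<ge> 1 \<and> part \<beta> 1 = j \<and> int (length \<beta>) - int (length \<alpha>) \<ge> 1 \<and>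
       part \<alpha> 1 = j \<and> part \<alpha> 2 = j \<and> smallest \<alpha> = 1 \<and> smallest \<beta> = 2)}"

definition P3bar :: "nat \<Rightarrow> nat list set" where
  "P3bar n = {xs. partition_of n xs \<and> rank xs \<ge> 0 \<and>
     (let j' = durfee xs; \<gamma> = dalpha xs; \<delta> = dbeta xs in
       j' \<ge> 1 \<and> length \<gamma> = length \<delta> \<and> int (part \<gamma> 1) \<le> int j' - 2 \<and>
       part \<delta> 1 = j' \<and> smallest \<delta> = 1)}"

end

theory Submission
  imports Defs
begin

definition cnt :: "nat list \<Rightarrow> nat \<Rightarrow> nat" where
  "cnt ys i = length (filter (\<lambda>y. i \<le> y) ys)"

lemma conj_cnt: "conj ys = map (cnt ys) [1..<Suc (foldr max ys 0)]"
  unfolding conj_def cnt_def by simp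

lemma cnt_Nil[simp]: "cnt [] i = 0"
  by (simp add: cnt_def)

lemma cnt_Cons: "cnt (y#ys) i = (if i \<le> y then 1 else 0) + cnt ys i"
  by (simp add: cnt_def)

lemma cnt_append: "cnt (xs @ ys) i = cnt xs i + cnt ys i"
  by (simp add: cnt_def)

lemma cnt_0: "cnt ys 0 = length ys"
  by (simp add: cnt_def)

lemma cnt_zero: "\<forall>y\<in>set ys. y < i \<Longrightarrow> cnt ys i = 0"
  by (induct ys) (auto simp: cnt_Cons)

lemma cnt_anti: "i \<le> k \<Longrightarrow> cnt ys k \<le> cnt ys i"
  by (induct ys) (auto simp: cnt_Cons)

lemma cnt_pos_all: "\<forall>y\<in>set ys. 1 \<le> y \<Longrightarrow> cnt ys 1 = length ys"
  by (induct ys) (auto simp: cnt_Cons)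

lemma foldr_max_ge: "(y::nat) \<in> set ys \<Longrightarrow> y \<le> foldr max ys 0"
  by (induct ys) (auto simp: le_max_iff_disj)

lemma foldr_max_le: "\<forall>y\<in>set ys. y \<le> (c::nat) \<Longrightarrow> foldr max ys 0 \<le> c"
  by (induct ys) auto

lemma foldr_max_sorted: "sorted_wrt (\<ge>) (c # cs) \<Longrightarrow> foldr max (c#cs) (0::nat) = c"
  using foldr_max_le[of cs c] by (auto simp: max_def)

lemma part_conj: "1 \<le> v \<Longrightarrow> part (conj ys) v = cnt ys v"
proof -
  assume v: "1 \<le> v"
  show ?thesis
  proof (cases "v \<le> foldr max ys 0")
    case True
    then show ?thesis using v
    proof -
      have "[1..<Suc (foldr max ys 0)] ! (v - 1) = v" using True v by (subst nth_upt) auto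
      moreover have "v - 1 < length (conj ys)" "v \<le> length (conj ys)" using True v by (auto simp: conj_cnt)
      ultimately show ?thesis using v unfolding part_def conj_cnt
        by (simp only: nth_map if_True simp_thms) (simp del: upt_Suc)
    qed
  next
    case False
    then have "\<forall>y\<in>set ys. y < v" using foldr_max_ge by force
    then show ?thesis using False by (simp add: part_def conj_cnt cnt_zero del: upt_Suc)
  qed
qed

lemma sum_cnt: "\<forall>y\<in>set ys. y \<le> K \<Longrightarrow> (\<Sum>v=1..K. cnt ys v) = sum_list ys"
proof (induct ys)
  case Nil then show ?case by (simp add: cnt_def)
next
  case (Cons y ys)
  have "(\<Sum>v=1..K. cnt (y#ys) v) = (\<Sum>v=1..K. (if v \<le> y then 1 else 0)) + (\<Sum>v=1..K. cnt ys v)"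
    unfolding cnt_Cons by (rule sum.distrib)
  also have "(\<Sum>v=1..K. (if v \<le> (y::nat) then 1 else 0::nat)) = (\<Sum>v\<in>{1..y}. 1)"
    using Cons.prems by (intro sum.mono_neutral_cong_right) auto
  finally show ?case using Cons by simp
qed

lemma cnt_lt_len: "sorted_wrt (\<ge>) (x#xs) \<Longrightarrow> x < v \<Longrightarrow> cnt (x#xs) v < length (x#xs)"
proof -
  assume s: "sorted_wrt (\<ge>) (x#xs)" and v: "x < v"
  have "\<forall>y\<in>set (x#xs). y < v" using s v by auto
  then have "cnt (x#xs) v = 0" by (rule cnt_zero)
  then show ?thesis by simp
qed

lemma cnt_hd: "v \<le> x \<Longrightarrow> 0 < cnt (x#xs) v"
  by (simp add: cnt_Cons)

lemma sorted_cnt_eq: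
  assumes "sorted_wrt (\<ge>) (xs::nat list)" "sorted_wrt (\<ge>) ys" "\<And>v. cnt xs v = cnt ys v"
  shows "xs = ys"
  using assms
proof (induct xs arbitrary: ys)
  case Nil
  then show ?case using cnt_0[of ys] by (metis cnt_Nil length_0_conv)
next
  case (Cons x xs)
  have len: "length (x#xs) = length ys" using Cons.prems(3)[of 0] by (simp add: cnt_0)
  then obtain y ys' where ys: "ys = y#ys'" by (cases ys) auto
  have "\<not> x < y"
  proof
    assume "x < y"
    then have "\<forall>z\<in>set (x#xs). z < y" using Cons.prems(1) by auto
    then have "cnt (x#xs) y = 0" by (rule cnt_zero)
    moreover have "0 < cnt ys y" using cnt_hd ys by simp
    ultimately show False using Cons.prems(3)[of y] by simp
  qed
  moreover have "\<not> y < x"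
  proof
    assume "y < x"
    then have "\<forall>z\<in>set ys. z < x" using Cons.prems(2) ys by auto
    then have "cnt ys x = 0" by (rule cnt_zero)
    moreover have "0 < cnt (x#xs) x" using cnt_hd by simp
    ultimately show False using Cons.prems(3)[of x] by simp
  qed
  ultimately have xy: "x = y" by simp
  have "\<And>v. cnt xs v = cnt ys' v" using Cons.prems(3) unfolding ys xy by (simp add: cnt_Cons)
  then have "xs = ys'" using Cons.hyps Cons.prems(1,2) ys by simp
  then show ?case using xy ys by simp
qed

lemma part_anti:
  assumes "sorted_wrt (\<ge>) xs" "1 \<le> i" "i \<le> k"
  shows "part xs k \<le> part xs i"
proof (cases "k \<le> length xs")
  case True
  then show ?thesis using assms unfolding part_def
    by (cases "i = k") (auto simp: sorted_wrt_iff_nth_less)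
next
  case False
  then show ?thesis by (simp add: part_def)
qed

lemma durfee_eq:
  assumes "sorted_wrt (\<ge>) xs" "j \<le> part xs j" "part xs (Suc j) < Suc j"
  shows "durfee xs = j"
  unfolding durfee_def
proof (rule Greatest_equality)
  show "j \<le> part xs j" by fact
  fix y assume y: "y \<le> part xs y"
  show "y \<le> j"
  proof (rule ccontr)
    assume "\<not> y \<le> j"
    then have "part xs y \<le> part xs (Suc j)" using part_anti[OF assms(1), of "Suc j" y] by simp
    then show False using y assms(3) \<open>\<not> y \<le> j\<close> by simp
  qed
qed

lemma durfee_prop: "durfee xs \<le> part xs (durfee xs) \<and> durfee xs \<le> length xs"
proof -
  have b: "\<forall>y. y \<le> part xs y \<longrightarrow> y \<le> length xs"
    by (auto simp: part_def split: if_splits)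
  have "durfee xs \<le> part xs (durfee xs)" unfolding durfee_def
    by (rule GreatestI_nat[of _ 0 "length xs"]) (use b in auto)
  then show ?thesis using b by blast
qed

lemma top_ge:
  assumes "sorted_wrt (\<ge>) xs" "j = durfee xs" "x \<in> set (take j xs)"
  shows "j \<le> x"
proof -
  from assms(3) obtain i where i: "i < length (take j xs)" "x = take j xs ! i"
    by (auto simp: in_set_conv_nth)
  have jl: "j \<le> length xs" "j \<le> part xs j" using durfee_prop assms(2) by auto
  then have "1 \<le> j" using i by simp
  then have "part xs j = xs ! (j - 1)" using jl by (simp add: part_def)
  moreover have "xs ! (j - 1) \<le> xs ! i" using i assms(1) jl
    by (cases "i = j - 1") (auto simp: sorted_wrt_iff_nth_less)
  ultimately show ?thesis using i jl by simp
qed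

lemma sorted_minus: "sorted_wrt (\<ge>) xs \<Longrightarrow> sorted_wrt (\<ge>) (map (\<lambda>x. x - (j::nat)) xs)"
  by (induct xs) auto

lemma recover:
  assumes px: "is_partition xs" and py: "is_partition ys"
    and d: "durfee xs = durfee ys" and a: "dalpha xs = dalpha ys" and b: "dbeta xs = dbeta ys"
  shows "xs = ys"
proof -
  define j where "j = durfee xs"
  have sx: "sorted_wrt (\<ge>) xs" and sy: "sorted_wrt (\<ge>) ys" using px py by (auto simp: is_partition_def)
  define Rx where "Rx = map (\<lambda>x. x - j) (take j xs)"
  define Ry where "Ry = map (\<lambda>x. x - j) (take j ys)"
  have lx: "j \<le> length xs" and ly: "j \<le> length ys" using durfee_prop d j_def by metis+
  have srx: "sorted_wrt (\<ge>) Rx" unfolding Rx_def by (rule sorted_minus) (use sx sorted_wrt_take in blast)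
  have sry: "sorted_wrt (\<ge>) Ry" unfolding Ry_def by (rule sorted_minus) (use sy sorted_wrt_take in blast)
  have ax: "dalpha xs = conj Rx" unfolding dalpha_def Rx_def j_def ..
  have ay: "dalpha ys = conj Ry" unfolding dalpha_def Ry_def j_def d ..
  have "cnt Rx v = cnt Ry v" for v
  proof (cases "v = 0")
    case True then show ?thesis using lx ly by (simp add: cnt_0 Rx_def Ry_def)
  next
    case False
    then have "cnt Rx v = part (dalpha xs) v" "cnt Ry v = part (dalpha ys) v"
      using part_conj[of v] ax ay by auto
    then show ?thesis using a by simp
  qed
  then have R: "Rx = Ry" using sorted_cnt_eq srx sry by blast
  have tx: "take j xs = map (\<lambda>r. r + j) Rx" unfolding Rx_def
    using top_ge[OF sx j_def] by (induct "take j xs") (auto intro!: map_idI[symmetric])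
  have ty: "take j ys = map (\<lambda>r. r + j) Ry" unfolding Ry_def
    using top_ge[OF sy, of j] d j_def by (auto intro!: map_idI[symmetric])
  have "drop j xs = drop j ys" using b d unfolding dbeta_def j_def by simp
  then show ?thesis using tx ty R by (metis append_take_drop_id)
qed

lemma take_R:
  assumes "sorted_wrt (\<ge>) xs"
  shows "take (durfee xs) xs = map (\<lambda>r. r + durfee xs) (map (\<lambda>x. x - durfee xs) (take (durfee xs) xs))"
  using top_ge[OF assms refl] by (auto intro!: map_idI[symmetric])

lemma sum_conj: "sum_list (conj ys) = sum_list ys"
proof -
  have "sum_list (conj ys) = sum (cnt ys) (set [1..<Suc (foldr max ys 0)])"
    unfolding conj_cnt by (rule sum_set_upt_conv_sum_list_nat[symmetric])
  also have "set [1..<Suc (foldr max ys 0)] = {1..foldr max ys 0}" by auto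
  also have "sum (cnt ys) {1..foldr max ys 0} = sum_list ys"
    by (rule sum_cnt) (auto intro: foldr_max_ge)
  finally show ?thesis .
qed

lemma sum_list_const_map: "sum_list (map (\<lambda>r. r + (c::nat)) xs) = sum_list xs + c * length xs"
  by (induct xs) auto

lemma sum_decomp:
  assumes "sorted_wrt (\<ge>) xs"
  shows "sum_list xs = durfee xs * durfee xs + sum_list (dalpha xs) + sum_list (dbeta xs)"
proof -
  define j where "j = durfee xs"
  have l: "j \<le> length xs" using durfee_prop j_def by metis
  have "sum_list xs = sum_list (take j xs) + sum_list (drop j xs)"
    by (metis append_take_drop_id sum_list_append)
  also have "sum_list (take j xs) = sum_list (map (\<lambda>x. x - j) (take j xs)) + j * j"
    using take_R[OF assms] l unfolding j_def[symmetric] by (metis length_map length_take min_absorb2 sum_list_const_map)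
  also have "sum_list (map (\<lambda>x. x - j) (take j xs)) = sum_list (dalpha xs)"
    unfolding dalpha_def j_def sum_conj ..
  finally show ?thesis unfolding dbeta_def j_def by simp
qed

lemma sorted_conj: "sorted_wrt (\<ge>) (conj ys)"
  unfolding conj_cnt sorted_wrt_iff_nth_less
  by (auto simp del: upt_Suc intro!: cnt_anti)

lemma smallest_1: "smallest xs = 1 \<Longrightarrow> xs \<noteq> [] \<and> Min (set xs) = 1"
  by (auto simp: smallest_def one_enat_def split: if_splits)

lemma smallest_2: "smallest xs = 2 \<Longrightarrow> xs \<noteq> [] \<and> Min (set xs) = 2"
  by (auto simp: smallest_def numeral_eq_enat split: if_splits)

lemma Q_decomp:
  assumes "xs \<in> Q3bar n"
  defines "j \<equiv> durfee xs"
  shows "\<exists>a b. 2 \<le> j \<and> dalpha xs = j#j#a@[1] \<and> dbeta xs = j#b@[2] \<and>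
     sorted_wrt (\<ge>) a \<and> (\<forall>x\<in>set a. 1 \<le> x \<and> x \<le> j) \<and>
     sorted_wrt (\<ge>) b \<and> (\<forall>x\<in>set b. 2 \<le> x \<and> x \<le> j) \<and> length a + 2 \<le> length b"
proof -
  define \<alpha> where "\<alpha> = dalpha xs"
  define \<beta> where "\<beta> = dbeta xs"
  have px: "is_partition xs" "sum_list xs = n" and j1: "j \<ge> 1" and pb1: "part \<beta> 1 = j"
    and len: "int (length \<beta>) - int (length \<alpha>) \<ge> 1" and pa1: "part \<alpha> 1 = j" and pa2: "part \<alpha> 2 = j"
    and sa: "smallest \<alpha> = 1" and sb: "smallest \<beta> = 2"
    using assms(1) unfolding Q3bar_def partition_of_def Let_def j_def \<alpha>_def \<beta>_def by auto
  have sx: "sorted_wrt (\<ge>) xs" using px by (simp add: is_partition_def)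
  have salpha: "sorted_wrt (\<ge>) \<alpha>" unfolding \<alpha>_def dalpha_def by (rule sorted_conj)
  have sbeta: "sorted_wrt (\<ge>) \<beta>" unfolding \<beta>_def dbeta_def using sx sorted_wrt_drop by blast
  have am: "\<alpha> \<noteq> []" "Min (set \<alpha>) = 1" using smallest_1[OF sa] by auto
  have bm: "\<beta> \<noteq> []" "Min (set \<beta>) = 2" using smallest_2[OF sb] by auto
  have amin: "\<forall>x\<in>set \<alpha>. 1 \<le> x" "1 \<in> set \<alpha>"
    using am Min_in[of "set \<alpha>"] Min_le[of "set \<alpha>"] by (auto simp del: Min_le)
  have bmin: "\<forall>x\<in>set \<beta>. 2 \<le> x" "2 \<in> set \<beta>"
    using bm Min_in[of "set \<beta>"] Min_le[of "set \<beta>"] by (auto simp del: Min_le)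
  obtain b0 \<beta>' where bs: "\<beta> = b0 # \<beta>'" using bm by (cases \<beta>) auto
  have b0: "b0 = j" using pb1 bs by (simp add: part_def)
  have j2: "2 \<le> j" using bmin bs b0 sbeta by auto
  have la2: "2 \<le> length \<alpha>" using pa2 j2 by (auto simp: part_def split: if_splits)
  then obtain a0 a1 \<alpha>' where as: "\<alpha> = a0 # a1 # \<alpha>'"
    by (cases \<alpha>; cases "tl \<alpha>") auto
  have a01: "a0 = j" "a1 = j" using pa1 pa2 as by (auto simp: part_def)
  have "1 \<in> set \<alpha>'" using amin as a01 j2 by auto
  then obtain a z where a': "\<alpha>' = a @ [z]" by (cases \<alpha>' rule: rev_exhaust) auto
  have "z \<le> 1" using \<open>1 \<in> set \<alpha>'\<close> salpha as a' by (auto simp: sorted_wrt_append)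
  moreover have "1 \<le> z" using amin as a' by auto
  ultimately have z: "z = 1" by simp
  have "length \<beta>' \<ge> 1" using len as a' bs by simp
  then obtain b w where b': "\<beta>' = b @ [w]" by (cases \<beta>' rule: rev_exhaust) auto
  have "w \<le> 2" using bmin(2) sbeta bs b' b0 j2 by (auto simp: sorted_wrt_append)
  moreover have "2 \<le> w" using bmin bs b' by auto
  ultimately have w: "w = 2" by simp
  show ?thesis
  proof (intro exI conjI)
    show "dalpha xs = j#j#a@[1]" using as a01 a' z \<alpha>_def by simp
    show "dbeta xs = j#b@[2]" using bs b0 b' w \<beta>_def by simp
    show "sorted_wrt (\<ge>) a" using salpha as a' by (simp add: sorted_wrt_append)
    show "\<forall>x\<in>set a. 1 \<le> x \<and> x \<le> j" using salpha as a' a01 amin by (auto simp: sorted_wrt_append)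
    show "sorted_wrt (\<ge>) b" using sbeta bs b' by (simp add: sorted_wrt_append)
    show "\<forall>x\<in>set b. 2 \<le> x \<and> x \<le> j" using sbeta bs b' b0 bmin by (auto simp: sorted_wrt_append)
    show "length a + 2 \<le> length b" using len as a' bs b' by simp
  qed (rule j2)
qed

definition tops :: "nat \<Rightarrow> nat list \<Rightarrow> nat list" where
  "tops j g = map (\<lambda>i. Suc j + cnt g (Suc i)) [0..<Suc j]"

definition build :: "nat \<Rightarrow> nat list \<Rightarrow> nat list \<Rightarrow> nat list" where
  "build j g d = tops j g @ d"

definition goodgd :: "nat \<Rightarrow> nat list \<Rightarrow> nat list \<Rightarrow> bool" where
  "goodgd j g d \<longleftrightarrow> 2 \<le> j \<and> sorted_wrt (\<ge>) g \<and> (\<forall>x\<in>set g. 1 \<le> x \<and> x < j) \<and>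
     sorted_wrt (\<ge>) d \<and> d \<noteq> [] \<and> hd d = Suc j \<and> (\<forall>x\<in>set d. 1 \<le> x \<and> x \<le> Suc j) \<and>
     1 \<in> set d \<and> length g = length d"

lemma length_tops[simp]: "length (tops j g) = Suc j"
  by (simp add: tops_def)

lemma nth_tops: "i < Suc j \<Longrightarrow> tops j g ! i = Suc j + cnt g (Suc i)"
  by (simp add: tops_def del: upt_Suc)

lemma sorted_tops: "sorted_wrt (\<ge>) (tops j g)"
  unfolding sorted_wrt_iff_nth_less by (auto simp: nth_tops intro!: cnt_anti)

lemma tops_ge: "x \<in> set (tops j g) \<Longrightarrow> Suc j \<le> x"
  by (auto simp: tops_def)

lemma tops_minus: "map (\<lambda>x. x - Suc j) (tops j g) = map (\<lambda>i. cnt g (Suc i)) [0..<Suc j]"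
  by (simp add: tops_def del: upt_Suc)

lemma sum_tops:
  assumes "\<forall>x\<in>set g. x \<le> Suc j"
  shows "sum_list (tops j g) = Suc j * Suc j + sum_list g"
proof -
  have "sum_list (tops j g) = sum_list (map (\<lambda>r. r + Suc j) (map (\<lambda>i. cnt g (Suc i)) [0..<Suc j]))"
    unfolding tops_def map_map comp_def by (rule arg_cong[where f=sum_list], rule map_cong) auto
  also have "\<dots> = sum_list (map (\<lambda>i. cnt g (Suc i)) [0..<Suc j]) + Suc j * Suc j"
    by (simp only: sum_list_const_map length_map length_upt) simp
  also have "sum_list (map (\<lambda>i. cnt g (Suc i)) [0..<Suc j]) = (\<Sum>i\<in>{0..<Suc j}. cnt g (Suc i))"
    by (simp only: sum_set_upt_conv_sum_list_nat[symmetric] set_upt)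
  also have "\<dots> = (\<Sum>v\<in>{Suc 0..<Suc (Suc j)}. cnt g v)"
    by (rule sum.shift_bounds_Suc_ivl[symmetric])
  also have "{Suc 0..<Suc (Suc j)} = {1..Suc j}" by auto
  also have "(\<Sum>v\<in>{1..Suc j}. cnt g v) = sum_list g" by (rule sum_cnt) (use assms in auto)
  finally show ?thesis by simp
qed

lemma build_props:
  assumes "goodgd j g d"
  defines "ys \<equiv> build j g d"
  shows "durfee ys = Suc j" "dbeta ys = d" "take (Suc j) ys = tops j g"
    "sum_list ys = Suc j * Suc j + sum_list g + sum_list d"
    "ys \<in> P3bar (sum_list ys)"
proof -
  have j2: "2 \<le> j" and sg: "sorted_wrt (\<ge>) g" and gb: "\<forall>x\<in>set g. 1 \<le> x \<and> x < j"
    and sd: "sorted_wrt (\<ge>) d" and dne: "d \<noteq> []" and hd: "hd d = Suc j"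
    and db: "\<forall>x\<in>set d. 1 \<le> x \<and> x \<le> Suc j" and d1: "1 \<in> set d" and lgd: "length g = length d"
    using assms(1) unfolding goodgd_def by auto
  have gz: "cnt g v = 0" if "j \<le> v" for v using gb that by (intro cnt_zero) auto
  have take: "take (Suc j) ys = tops j g" and drop: "drop (Suc j) ys = d"
    unfolding ys_def build_def by simp_all
  show "take (Suc j) ys = tops j g" by (fact take)
  have sys: "sorted_wrt (\<ge>) ys" unfolding ys_def build_def sorted_wrt_append
    using sorted_tops sd tops_ge db by fastforce
  have nz: "0 \<notin> set ys" unfolding ys_def build_def using tops_ge db by fastforce
  have p1: "part ys (Suc j) = Suc j" unfolding ys_def build_def part_def
    using gz[of "Suc j"] by (simp add: nth_append nth_tops)
  obtain d' where dd: "d = Suc j # d'" using dne hd by (cases d) auto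
  have p2: "part ys (Suc (Suc j)) = Suc j" unfolding ys_def build_def part_def
    by (simp add: nth_append dd)
  show dur: "durfee ys = Suc j" by (rule durfee_eq[OF sys]) (use p1 p2 in auto)
  show beta: "dbeta ys = d" unfolding dbeta_def dur using drop .
  have alpha: "dalpha ys = conj (map (\<lambda>i. cnt g (Suc i)) [0..<Suc j])"
    unfolding dalpha_def dur take tops_minus ..
  define C where "C = map (\<lambda>i. cnt g (Suc i)) [0..<Suc j]"
  have C: "C = cnt g 1 # map (\<lambda>i. cnt g (Suc i)) [1..<Suc j]"
    unfolding C_def by (simp add: upt_conv_Cons del: upt_Suc)
  have sC: "sorted_wrt (\<ge>) C"
    unfolding C_def sorted_wrt_iff_nth_less by (auto simp del: upt_Suc intro!: cnt_anti)
  have cg1: "cnt g 1 = length g" using gb by (intro cnt_pos_all) auto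
  have lenA: "length (dalpha ys) = length g"
    unfolding alpha C_def[symmetric] conj_def length_map length_upt using foldr_max_sorted[of "cnt g 1"] sC C cg1
    by simp
  have "part (dalpha ys) 1 = cnt C 1" unfolding alpha C_def[symmetric] by (rule part_conj) simp
  also have "cnt C 1 = card {i. i < length C \<and> 1 \<le> C ! i}"
    unfolding cnt_def by (rule length_filter_conv_card)
  also have "\<dots> \<le> card {..<j - 1}"
  proof (rule card_mono)
    show "{i. i < length C \<and> 1 \<le> C ! i} \<subseteq> {..<j - 1}"
    proof
      fix i assume "i \<in> {i. i < length C \<and> 1 \<le> C ! i}"
      then have i: "i < Suc j" "1 \<le> cnt g (Suc i)" unfolding C_def by (auto simp del: upt_Suc)
      then have "\<not> j \<le> Suc i" using gz by fastforce
      then show "i \<in> {..<j - 1}" by simp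
    qed
  qed simp
  finally have pa: "part (dalpha ys) 1 \<le> j - 1" by simp
  have rk: "rank ys = 0"
  proof -
    have "part ys 1 = Suc j + length g" unfolding ys_def build_def part_def
      using cg1 by (simp add: nth_append nth_tops)
    moreover have "length ys = Suc j + length d" unfolding ys_def build_def by simp
    ultimately show ?thesis unfolding rank_def using lgd by simp
  qed
  have sd1: "smallest d = 1"
  proof -
    have "Min (set d) = 1" using d1 db by (intro Min_eqI) auto
    then show ?thesis using dne by (simp add: smallest_def one_enat_def)
  qed
  show "sum_list ys = Suc j * Suc j + sum_list g + sum_list d"
    unfolding ys_def build_def using sum_tops[of g j] gb by fastforce
  show "ys \<in> P3bar (sum_list ys)"
    unfolding P3bar_def partition_of_def is_partition_def Let_def
    using sys nz rk dur lenA lgd pa j2 beta dd sd1 by (auto simp: part_def)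
qed

lemma build_inj:
  assumes g1: "goodgd j g d" and g2: "goodgd j' g' d'" and e: "build j g d = build j' g' d'"
  shows "j = j' \<and> g = g' \<and> d = d'"
proof -
  have jj: "j = j'" using build_props(1)[OF g1] build_props(1)[OF g2] e by simp
  have dd: "d = d'" using build_props(2)[OF g1] build_props(2)[OF g2] e by simp
  have tt: "tops j g = tops j g'" using build_props(3)[OF g1] build_props(3)[OF g2] e jj by simp
  have gb: "\<forall>x\<in>set g. 1 \<le> x \<and> x < j" "\<forall>x\<in>set g'. 1 \<le> x \<and> x < j"
    "length g = length d" "length g' = length d'" "sorted_wrt (\<ge>) g" "sorted_wrt (\<ge>) g'"
    using g1 g2 jj unfolding goodgd_def by auto
  have "cnt g v = cnt g' v" for v
  proof -
    consider "v = 0" | "j \<le> v" | "1 \<le> v \<and> v < j" by linarith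
    then show ?thesis
    proof cases
      case 1 then show ?thesis using gb dd by (simp add: cnt_0)
    next
      case 2
      then have "cnt g v = 0" "cnt g' v = 0" using gb(1,2) by (auto intro!: cnt_zero)
      then show ?thesis by simp
    next
      case 3
      then have "tops j g ! (v - 1) = tops j g' ! (v - 1)" using tt by simp
      moreover have "v - 1 < Suc j" "Suc (v - 1) = v" using 3 by auto
      ultimately show ?thesis using nth_tops[of "v - 1" j g] nth_tops[of "v - 1" j g'] by simp
    qed
  qed
  then have "g = g'" using sorted_cnt_eq gb by blast
  then show ?thesis using jj dd by simp
qed

definition G :: "nat list \<Rightarrow> nat list" where
  "G b = map (\<lambda>x. x - 1) b @ [1]"

definition D :: "nat \<Rightarrow> nat list \<Rightarrow> nat list \<Rightarrow> nat list" where
  "D j a b = Suc j # map Suc a @ replicate (length b - length a) 1"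

definition F :: "nat list \<Rightarrow> nat list" where
  "F xs = build (durfee xs) (G (butlast (tl (dbeta xs)))) (D (durfee xs) (butlast (drop 2 (dalpha xs))) (butlast (tl (dbeta xs))))"

lemma sum_minus1: "\<forall>x\<in>set b. 1 \<le> x \<Longrightarrow> sum_list (map (\<lambda>x. x - 1) b) + length b = sum_list b"
  by (induct b) auto

lemma sum_Suc: "sum_list (map Suc a) = sum_list a + length a"
  by (induct a) auto

lemma sorted_rep: "sorted_wrt (\<ge>) (replicate k (x::nat))"
  by (induct k) auto

lemma minus1_inj: "\<forall>x\<in>set b. 1 \<le> x \<Longrightarrow> \<forall>x\<in>set b'. 1 \<le> (x::nat) \<Longrightarrow>
  map (\<lambda>x. x - 1) b = map (\<lambda>x. x - 1) b' \<Longrightarrow> b = b'"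
proof (induct b arbitrary: b')
  case Nil then show ?case by simp
next
  case (Cons x xs')
  show ?case
  proof (cases b')
    case Nil then show ?thesis using Cons.prems by simp
  next
    case (Cons y ys)
    have "x - 1 = y - 1" "map (\<lambda>x. x - 1) xs' = map (\<lambda>x. x - 1) ys"
      using Cons.prems \<open>b' = y # ys\<close> by simp_all
    moreover have "1 \<le> x" "1 \<le> y" using Cons.prems \<open>b' = y # ys\<close> by simp_all
    ultimately have "x = y" by simp
    moreover have "xs' = ys" using Cons.hyps Cons.prems \<open>b' = y # ys\<close> \<open>map (\<lambda>x. x - 1) xs' = _\<close> by simp
    ultimately show ?thesis using \<open>b' = y # ys\<close> by simp
  qed
qed

lemma good_of:
  assumes "2 \<le> j" "sorted_wrt (\<ge>) a" "\<forall>x\<in>set a. 1 \<le> x \<and> x \<le> j"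
     "sorted_wrt (\<ge>) b" "\<forall>x\<in>set b. 2 \<le> x \<and> x \<le> j" "length a + 2 \<le> length b"
  shows "goodgd j (G b) (D j a b)"
proof -
  have sg: "sorted_wrt (\<ge>) (G b)"
    unfolding G_def sorted_wrt_append using assms(4,5) by (auto intro: sorted_minus)
  have sd: "sorted_wrt (\<ge>) (D j a b)"
    unfolding D_def using assms(2,3) sorted_rep by (auto simp: sorted_wrt_append sorted_wrt_map)
  show ?thesis unfolding goodgd_def using sg sd assms
    by (auto simp: G_def D_def)
qed

lemma F_props:
  assumes "xs \<in> Q3bar n"
  shows "F xs \<in> P3bar n"
proof -
  define j where "j = durfee xs"
  obtain a b where ab: "2 \<le> j" "dalpha xs = j#j#a@[1]" "dbeta xs = j#b@[2]"
     "sorted_wrt (\<ge>) a" "\<forall>x\<in>set a. 1 \<le> x \<and> x \<le> j"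
     "sorted_wrt (\<ge>) b" "\<forall>x\<in>set b. 2 \<le> x \<and> x \<le> j" "length a + 2 \<le> length b"
    using Q_decomp[OF assms] unfolding j_def by blast
  have Fx: "F xs = build j (G b) (D j a b)" unfolding F_def j_def[symmetric] ab by simp
  have good: "goodgd j (G b) (D j a b)" using good_of ab by blast
  have px: "sorted_wrt (\<ge>) xs" "sum_list xs = n" using assms
    unfolding Q3bar_def partition_of_def is_partition_def by auto
  have "n = j * j + sum_list (dalpha xs) + sum_list (dbeta xs)"
    using sum_decomp[OF px(1)] px(2) j_def by simp
  also have "\<dots> = Suc j * Suc j + sum_list (G b) + sum_list (D j a b)"
  proof -
    have h: "sum_list (map (\<lambda>x. x - 1) b) + length b = sum_list b" by (rule sum_minus1) (use ab(7) in auto)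
    show ?thesis using ab(2,3,8) h unfolding G_def D_def by (simp add: sum_Suc sum_list_replicate)
  qed
  also have "\<dots> = sum_list (F xs)" unfolding Fx using build_props(4)[OF good] by simp
  finally show ?thesis using build_props(5)[OF good] Fx by simp
qed

lemma takeWhile_rep: "takeWhile (\<lambda>x. x \<noteq> 1) (replicate k (1::nat)) = []"
  by (cases k) auto

lemma takeWhile_D: "\<forall>x\<in>set a. 1 \<le> x \<Longrightarrow> takeWhile (\<lambda>x. x \<noteq> 1) (map Suc a @ replicate k 1) = map Suc a"
  by (induct a) (auto simp: takeWhile_rep)



lemma F_inj:
  assumes "xs \<in> Q3bar n" "ys \<in> Q3bar n" "F xs = F ys"
  shows "xs = ys"
proof -
  obtain a b where ab: "2 \<le> durfee xs" "dalpha xs = durfee xs#durfee xs#a@[1]" "dbeta xs = durfee xs#b@[2]"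
     "sorted_wrt (\<ge>) a" "\<forall>x\<in>set a. 1 \<le> x \<and> x \<le> durfee xs"
     "sorted_wrt (\<ge>) b" "\<forall>x\<in>set b. 2 \<le> x \<and> x \<le> durfee xs" "length a + 2 \<le> length b"
    using Q_decomp[OF assms(1)] by blast
  obtain a' b' where ab': "2 \<le> durfee ys" "dalpha ys = durfee ys#durfee ys#a'@[1]" "dbeta ys = durfee ys#b'@[2]"
     "sorted_wrt (\<ge>) a'" "\<forall>x\<in>set a'. 1 \<le> x \<and> x \<le> durfee ys"
     "sorted_wrt (\<ge>) b'" "\<forall>x\<in>set b'. 2 \<le> x \<and> x \<le> durfee ys" "length a' + 2 \<le> length b'"
    using Q_decomp[OF assms(2)] by blast
  have Fx: "F xs = build (durfee xs) (G b) (D (durfee xs) a b)" unfolding F_def ab by simp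
  have Fy: "F ys = build (durfee ys) (G b') (D (durfee ys) a' b')" unfolding F_def ab' by simp
  have good: "goodgd (durfee xs) (G b) (D (durfee xs) a b)" using good_of ab by blast
  have good': "goodgd (durfee ys) (G b') (D (durfee ys) a' b')" using good_of ab' by blast
  have e: "durfee xs = durfee ys" "G b = G b'" "D (durfee xs) a b = D (durfee ys) a' b'"
    using build_inj[OF good good'] assms(3) Fx Fy by auto
  have "map (\<lambda>x. x - 1) b = map (\<lambda>x. x - 1) b'" using e(2) unfolding G_def by simp
  moreover have "\<forall>x\<in>set b. 1 \<le> x" "\<forall>x\<in>set b'. 1 \<le> x" using ab(7) ab'(7) by auto
  ultimately have bb: "b = b'" using minus1_inj[of b b'] by blast
  have "map Suc a @ replicate (length b - length a) 1 = map Suc a' @ replicate (length b' - length a') 1"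
    using e(3) unfolding D_def by simp
  then have "takeWhile (\<lambda>x. x \<noteq> 1) (map Suc a @ replicate (length b - length a) 1) =
      takeWhile (\<lambda>x. x \<noteq> 1) (map Suc a' @ replicate (length b' - length a') 1)" by (rule arg_cong)
  moreover have "\<forall>x\<in>set a. 1 \<le> x" "\<forall>x\<in>set a'. 1 \<le> x" using ab(5) ab'(5) by auto
  ultimately have "map Suc a = map Suc a'" by (simp only: takeWhile_D)
  then have aa: "a = a'" by simp
  have "dalpha xs = dalpha ys" "dbeta xs = dbeta ys" using ab ab' aa bb e(1) by simp_all
  moreover have "is_partition xs" "is_partition ys" using assms unfolding Q3bar_def partition_of_def by auto
  ultimately show ?thesis using recover e(1) by blast
qed

theorem lemma5p3:
  fixes n :: nat
  assumes "n \<ge> 1"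
  shows "\<exists>f. inj_on f (Q3bar n) \<and> f ` Q3bar n \<subseteq> P3bar n"
proof (intro exI conjI)
  show "inj_on F (Q3bar n)" by (rule inj_onI) (rule F_inj)
  show "F ` Q3bar n \<subseteq> P3bar n" using F_props by blast
qed

end
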